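(* Let $W$ be a unitary $2\times2$ matrix with $\det W=1$ and $\operatorname{tr}W\ge 0$. Then for all unit scalars $\lambda\in\mathbb C$, $\|I-W\|\le\|I-\lambda W\|$.
   Context: $\|\cdot\|$ denotes the operator norm: $\|U\|=\sup\{\|Uv\| : v\in\mathbb C^2,\ \|v\|=1\}$. (For such $W$, $\operatorname{tr}W$ is real.) *)

theory Defs
  imports "HOL-Analysis.Analysis"
begin

definition cadjoint :: "complex^'n^'n \<Rightarrow> complex^'n^'n" where
  "cadjoint A = (\<chi> i j. cnj (A $ j $ i))"

definition unitary_mat :: "complex^'n^'n \<Rightarrow> bool" where
  "unitary_mat U \<longleftrightarrow> cadjoint U ** U = mat 1"

definition opnorm :: "complex^'n^'n \<Rightarrow> real" where
  "opnorm U = Sup {norm (U *v v) | v. norm v = 1}"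

end

theory Submission
  imports Defs
begin

lemma norm2_vec2: "(norm (v::complex^2))^2 = (cmod (v$1))^2 + (cmod (v$2))^2"
  by (simp add: norm_vec_def L2_set_def sum_2)

lemma ident: "(cmod (al*p + cnj be * q))^2 + (cmod (- be * p + cnj al * q))^2
   = ((cmod al)^2 + (cmod be)^2) * ((cmod p)^2 + (cmod q)^2)"
  unfolding cmod_power2 by (simp add: power2_eq_square algebra_simps)

lemma col: "(cmod (1 - l*a))^2 + (cmod (l*b))^2 = 2 - 2 * Re (l*a)"
  if "cmod l = 1" "(cmod a)^2 + (cmod b)^2 = 1" for l a b :: complex
proof -
  have "(cmod (l*b))^2 = (cmod b)^2" using that by (simp add: norm_mult)
  moreover have "(cmod (1 - l*a))^2 = 1 - 2*Re(l*a) + (cmod a)^2"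
  proof -
    have "(cmod (l*a))^2 = (cmod a)^2" using that by (simp add: norm_mult)
    hence "Re(l*a)^2 + Im(l*a)^2 = (cmod a)^2" by (simp add: cmod_power2)
    thus ?thesis unfolding cmod_power2 by (simp add: power2_eq_square algebra_simps)
  qed
  ultimately show ?thesis using that by simp
qed

theorem lemma7p17:
  fixes W :: "complex^2^2" and lam :: complex
  assumes "unitary_mat W"
    and "det W = 1"
    and "Re (trace W) \<ge> 0"
    and "norm lam = 1"
  shows "opnorm (mat 1 - W) \<le> opnorm (mat 1 - mat lam ** W)"
proof -
  define a where "a = W$1$1"
  define b where "b = W$2$1"
  define c where "c = W$1$2"
  define d where "d = W$2$2"
  have U: "cadjoint W ** W = mat 1" using assms(1) unfolding unitary_mat_def .
  have E1: "cnj a * a + cnj b * b = 1"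
    using arg_cong[OF U, of "\<lambda>M. M$1$1"]
    by (simp add: cadjoint_def matrix_matrix_mult_def sum_2 mat_def a_def b_def)
  have E2: "cnj a * c + cnj b * d = 0"
    using arg_cong[OF U, of "\<lambda>M. M$1$2"]
    by (simp add: cadjoint_def matrix_matrix_mult_def sum_2 mat_def a_def b_def c_def d_def)
  have E3: "a * d - c * b = 1" using assms(2) by (simp add: det_2 a_def b_def c_def d_def)
  have dd: "d = cnj a"
  proof -
    have "d - cnj a = -(d*(cnj a * a + cnj b * b - 1) - b*(cnj a * c + cnj b * d) - cnj a * (a * d - c * b - 1))"
      by (simp add: algebra_simps)
    thus ?thesis using E1 E2 E3 by simp
  qed
  have cc: "c = - cnj b"
  proof -
    have "c + cnj b = -(c*(cnj a * a + cnj b * b - 1) - a*(cnj a * c + cnj b * d) + cnj b * (a * d - c * b - 1))"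
      by (simp add: algebra_simps)
    thus ?thesis using E1 E2 E3 by (simp add: eq_neg_iff_add_eq_0)
  qed
  have ab: "(cmod a)^2 + (cmod b)^2 = 1"
  proof -
    have "complex_of_real ((cmod a)^2 + (cmod b)^2) = 1"
      using E1 by (simp add: complex_norm_square[symmetric] mult.commute)
    thus ?thesis by (metis of_real_eq_1_iff)
  qed
  have tr: "Re a \<ge> 0" using assms(3) dd
    by (simp add: trace_def sum_2 a_def d_def)
  define r where "r = sqrt (2 - 2 * Re a)"
  have e1n: "norm (axis 1 (1::complex) :: complex^2) = 1" by simp
  have L: "opnorm (mat 1 - W) \<le> r"
    unfolding opnorm_def
  proof (rule cSup_least)
    show "{norm ((mat 1 - W) *v v) |v. norm v = 1} \<noteq> {}" using e1n by blast
  next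
    fix x assume "x \<in> {norm ((mat 1 - W) *v v) |v. norm v = 1}"
    then obtain v where v: "norm v = 1" "x = norm ((mat 1 - W) *v v)" by blast
    have vv: "(cmod (v$1))^2 + (cmod (v$2))^2 = 1" using v(1) norm2_vec2[of v] by simp
    have "x^2 = (cmod ((1 - a) * v$1 + cnj b * v$2))^2 + (cmod (- b * v$1 + cnj (1-a) * v$2))^2"
      unfolding v(2) norm2_vec2
      by (simp add: matrix_vector_mult_def sum_2 mat_def a_def[symmetric] b_def[symmetric]
          c_def[symmetric] d_def[symmetric] dd cc algebra_simps)
    also have "\<dots> = (cmod (1-a))^2 + (cmod b)^2" using ident[of "1-a" "v$1" b "v$2", unfolded vv complex_cnj_diff complex_cnj_one]
      by (simp only: mult_1_right diff_conv_add_uminus mult_minus_left add.commute complex_cnj_add complex_cnj_minus complex_cnj_one)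
    also have "\<dots> = 2 - 2 * Re a" using col[of 1 a b] ab by simp
    finally have "x^2 = 2 - 2 * Re a" .
    thus "x \<le> r" unfolding r_def using v(2) by (metis norm_ge_zero real_sqrt_abs abs_of_nonneg order_refl)
  qed
  let ?A = "mat 1 - mat lam ** W"
  have bdd: "bdd_above {norm (?A *v v) |v. norm v = 1}"
  proof -
    obtain K where K: "\<And>x. norm (?A *v x) \<le> norm x * K"
      using bounded_linear.bounded[OF matrix_vector_mul_bounded_linear[of ?A]] by blast
    show ?thesis
    proof (rule bdd_aboveI)
      fix y assume "y \<in> {norm (?A *v v) |v. norm v = 1}"
      then obtain v where "norm v = 1" "y = norm (?A *v v)" by blast
      thus "y \<le> K" using K[of v] by simp
    qed
  qed
  have N1: "(norm (?A *v axis 1 1))^2 = 2 - 2 * Re (lam * a)"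
    unfolding norm2_vec2
    by (simp add: matrix_vector_mult_def matrix_matrix_mult_def sum_2 mat_def axis_def
       a_def[symmetric] b_def[symmetric] col assms(4) ab)
  have N2: "(norm (?A *v axis 2 1))^2 = 2 - 2 * Re (lam * cnj a)"
  proof -
    have "(norm (?A *v axis 2 1))^2 = (cmod (lam * c))^2 + (cmod (1 - lam * d))^2"
      unfolding norm2_vec2
      by (simp add: matrix_vector_mult_def matrix_matrix_mult_def sum_2 mat_def axis_def
         c_def[symmetric] d_def[symmetric])
    also have "\<dots> = 2 - 2 * Re (lam * cnj a)"
      using col[of lam "cnj a" "cnj b"] assms(4) ab by (simp add: cc dd norm_mult add.commute)
    finally show ?thesis .
  qed
  have rel: "Re lam \<le> 1" using assms(4) complex_Re_le_cmod[of lam] by simp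
  have sum: "Re (lam * a) + Re (lam * cnj a) = 2 * Re lam * Re a" by simp
  have "Re lam * Re a \<le> Re a" using mult_right_mono[OF rel tr] by simp
  hence key: "r^2 \<le> (norm (?A *v axis 1 1))^2 \<or> r^2 \<le> (norm (?A *v axis 2 1))^2"
  proof -
    have "Re a \<le> cmod a" by (rule complex_Re_le_cmod)
    moreover have "cmod a \<le> 1"
    proof -
      have h: "(cmod a)^2 \<le> 1" using ab zero_le_power2[of "cmod b"] by linarith
      show ?thesis using power2_le_imp_le[of "cmod a" 1] h by simp
    qed
    ultimately have nn: "0 \<le> 2 - 2 * Re a" by linarith
    have r2: "r^2 = 2 - 2 * Re a" unfolding r_def using nn by (rule real_sqrt_pow2)
    show ?thesis using N1 N2 sum r2 \<open>Re lam * Re a \<le> Re a\<close> by linarith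
  qed
  have up: "norm (?A *v axis k 1) \<le> opnorm ?A" for k :: 2
    unfolding opnorm_def by (rule cSup_upper[OF _ bdd]) auto
  have "r \<le> opnorm ?A"
    using key up[of 1] up[of 2] unfolding r_def
    by (meson norm_ge_zero order_trans power2_le_imp_le r_def real_sqrt_ge_zero)
  with L show ?thesis by simp
qed

end
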